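(* Let $a, A$ be real numbers with $a+3>0$ and $$\frac{a+3}{2}=\frac{2}{A+3},$$ let $b_1,\dots,b_N$ and $B_1,\dots,B_N$ be real numbers with $$\sqrt{\frac{2}{a+3}}\,(b_n+3)=\sqrt{\frac{2}{A+3}}\,(B_n+3)\qquad (n=1,\dots,N),$$ and let $\eta,\mathcal{E},\lambda_1,\dots,\lambda_N,L$ be real numbers. Consider the general polynomial potentials $$U(r)=\xi r^{a+1}+\sum_{n=1}^N\mu_n r^{b_n+1},\qquad V(\rho)=\eta\rho^{A+1}+\sum_{n=1}^N\lambda_n\rho^{B_n+1},$$ where the parameters of $U$ are related to those of $V$ by the replacements $\xi=-\mathcal{E}$ and $\mu_n=\lambda_n$ ($n=1,\dots,N$). Suppose $\theta$ satisfies the orbit equation for the potential $U$ with energy $E=-\eta$ and angular momentum $L$ on an open interval $I\subset(0,\infty)$. Then, with the coordinate transformation $r=\rho^{(A+3)/2}$, $\theta=\frac{A+3}{2}\phi$, i.e. with $$\phi(\rho)=\frac{2}{A+3}\,\theta\!\left(\rho^{(A+3)/2}\right),$$ the function $\phi$ satisfies the orbit equation for the potential $V$ with energy $\mathcal{E}$ and the same angular momentum $L$ on the interval $J=\{\rho>0:\rho^{(A+3)/2}\in I\}$.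
   Context: For a central potential $W$ on $(0,\infty)$, energy $E$ and angular momentum $L$, a differentiable function $\theta$ on an open interval $I\subset(0,\infty)$ is said to satisfy the (classical) orbit equation if for all $r\in I$ the quantity $E-\frac{L^2}{2r^2}-W(r)$ is positive and $$\frac{d\theta}{dr}=\frac{L/r^{2}}{\sqrt{2\left[E-\frac{L^{2}}{2r^{2}}-W(r)\right]}}.$$ The exponents $a,b_n,A,B_n$ are arbitrary real numbers (general polynomial potentials allow arbitrary real powers). *)

theory Defs
  imports "HOL-Analysis.Analysis"
begin

definition orbit_eq :: "(real \<Rightarrow> real) \<Rightarrow> real \<Rightarrow> real \<Rightarrow> (real \<Rightarrow> real) \<Rightarrow> real set \<Rightarrow> bool" where
  "orbit_eq W E L \<theta> I \<longleftrightarrow>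
     open I \<and> is_interval I \<and> I \<noteq> {} \<and> I \<subseteq> {0<..} \<and>
     (\<forall>r\<in>I. E - L\<^sup>2 / (2 * r\<^sup>2) - W r > 0 \<and>
        (\<theta> has_real_derivative (L / r\<^sup>2) / sqrt (2 * (E - L\<^sup>2 / (2 * r\<^sup>2) - W r))) (at r))"

definition gen_poly_pot :: "real \<Rightarrow> real \<Rightarrow> nat \<Rightarrow> (nat \<Rightarrow> real) \<Rightarrow> (nat \<Rightarrow> real) \<Rightarrow> real \<Rightarrow> real" where
  "gen_poly_pot c e N d f r = c * r powr (e + 1) + (\<Sum>n=1..N. d n * r powr (f n + 1))"

end

theory Submission
  imports Defs
begin
lemma sqp: "(x::real) > 0 \<Longrightarrow> (x powr k)\<^sup>2 = x powr (2*k)"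
  by (simp add: power2_eq_square powr_add[symmetric])
lemma sqp2: "(x::real) > 0 \<Longrightarrow> x powr (2*k-2) * x\<^sup>2 = x powr (2*k)"
proof -
  assume x: "x > 0"
  have "x\<^sup>2 = x powr 2" using x by (simp add: powr_numeral)
  thus ?thesis by (simp add: powr_add[symmetric])
qed
lemma sqp3: "(x::real) > 0 \<Longrightarrow> x powr (2*k-2) = (x powr (k-1))\<^sup>2"
  by (simp add: power2_eq_square powr_add[symmetric])

theorem mainTheorem1:
  fixes a A \<eta> \<E> L :: real and N :: nat
    and b B lam :: "nat \<Rightarrow> real"
    and \<xi> :: real and \<mu> :: "nat \<Rightarrow> real"
    and \<theta> :: "real \<Rightarrow> real" and I :: "real set"
  assumes ha: "a + 3 > 0"
    and haA: "(a + 3) / 2 = 2 / (A + 3)"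
    and hbB: "\<forall>n\<in>{1..N}. sqrt (2 / (a + 3)) * (b n + 3) = sqrt (2 / (A + 3)) * (B n + 3)"
    and hxi: "\<xi> = - \<E>"
    and hmu: "\<forall>n\<in>{1..N}. \<mu> n = lam n"
    and horb: "orbit_eq (gen_poly_pot \<xi> a N \<mu> b) (- \<eta>) L \<theta> I"
  shows "orbit_eq (gen_poly_pot \<eta> A N lam B) \<E> L
           (\<lambda>\<rho>. 2 / (A + 3) * \<theta> (\<rho> powr ((A + 3) / 2)))
           {\<rho>. \<rho> > 0 \<and> \<rho> powr ((A + 3) / 2) \<in> I}"
proof -
  define k where "k = (A + 3) / 2"
  have Ap: "A + 3 > 0"
  proof (rule ccontr)
    assume "\<not> A + 3 > 0"
    hence "2 / (A + 3) \<le> 0" by (simp add: divide_nonpos_nonneg)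
    with haA ha show False by simp
  qed
  hence kp: "k > 0" by (simp add: k_def)
  have ak: "a + 3 = 2 / k" using haA Ap unfolding k_def by (simp add: field_simps)
  have bk: "k * (b n + 3) = B n + 3" if "n \<in> {1..N}" for n
  proof -
    have e1: "sqrt (2 / (a + 3)) = sqrt k" using ak kp by simp
    have e2: "sqrt (2 / (A + 3)) = sqrt (1 / k)" unfolding k_def by simp
    have "sqrt k * (b n + 3) = sqrt (1/k) * (B n + 3)" using hbB that e1 e2 by simp
    hence "sqrt k * (sqrt k * (b n + 3)) = sqrt k * (sqrt (1/k) * (B n + 3))" by simp
    moreover have "sqrt k * sqrt (1/k) = 1" using kp by (simp add: real_sqrt_mult[symmetric])
    moreover have "sqrt k * sqrt k = k" using kp by simp
    ultimately show ?thesis by (metis mult.assoc mult_1)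
  qed
  from horb have oI: "open I" and iI: "is_interval I" and neI: "I \<noteq> {}" and sI: "I \<subseteq> {0<..}"
    and pI: "\<And>r. r \<in> I \<Longrightarrow> - \<eta> - L\<^sup>2 / (2 * r\<^sup>2) - gen_poly_pot \<xi> a N \<mu> b r > 0 \<and>
        (\<theta> has_real_derivative (L / r\<^sup>2) / sqrt (2 * (- \<eta> - L\<^sup>2 / (2 * r\<^sup>2) - gen_poly_pot \<xi> a N \<mu> b r))) (at r)"
    unfolding orbit_eq_def by auto
  define J where "J = {\<rho>::real. \<rho> > 0 \<and> \<rho> powr k \<in> I}"
  have key: "\<E> - L\<^sup>2 / (2 * \<rho>\<^sup>2) - gen_poly_pot \<eta> A N lam B \<rho>
      = \<rho> powr (2*k - 2) * (- \<eta> - L\<^sup>2 / (2 * (\<rho> powr k)\<^sup>2) - gen_poly_pot \<xi> a N \<mu> b (\<rho> powr k))"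
    if rp: "\<rho> > 0" for \<rho> :: real
  proof -
    have p1: "\<rho> powr (2*k - 2) * \<eta> = \<eta> * \<rho> powr (A + 1)"
    proof -
      have "2*k - 2 = A + 1" unfolding k_def by simp
      thus ?thesis by (simp only: mult.commute)
    qed
    have p2: "\<rho> powr (2*k - 2) * (L\<^sup>2 / (2 * (\<rho> powr k)\<^sup>2)) = L\<^sup>2 / (2 * \<rho>\<^sup>2)"
    proof -
      have "(\<rho> powr k)\<^sup>2 = \<rho> powr (2*k - 2) * \<rho>\<^sup>2"
        using rp sqp[OF rp, of k] sqp2[OF rp, of k] by simp
      thus ?thesis using rp by (simp add: field_simps)
    qed
    have p3: "\<rho> powr (2*k - 2) * (\<xi> * (\<rho> powr k) powr (a + 1)) = \<xi>"
    proof -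
      have "\<rho> powr (2*k - 2) * (\<rho> powr k) powr (a + 1) = \<rho> powr (2*k - 2 + k * (a+1))"
        unfolding powr_powr by (rule powr_add[symmetric])
      also have "2*k - 2 + k * (a+1) = k * (a + 3) - 2" by (simp add: algebra_simps)
      also have "\<dots> = 0" using ak kp by simp
      finally show ?thesis using rp by (simp add: algebra_simps)
    qed
    have p4: "\<rho> powr (2*k - 2) * (\<Sum>n=1..N. \<mu> n * (\<rho> powr k) powr (b n + 1))
        = (\<Sum>n=1..N. lam n * \<rho> powr (B n + 1))"
      unfolding sum_distrib_left
    proof (rule sum.cong[OF refl])
      fix n assume n: "n \<in> {1..N}"
      have "\<rho> powr (2*k - 2) * (\<rho> powr k) powr (b n + 1) = \<rho> powr (2*k - 2 + k * (b n + 1))"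
        unfolding powr_powr by (rule powr_add[symmetric])
      also have "2*k - 2 + k * (b n + 1) = k * (b n + 3) - 2" by (simp add: algebra_simps)
      also have "\<dots> = B n + 1" using bk[OF n] by simp
      finally show "\<rho> powr (2*k - 2) * (\<mu> n * (\<rho> powr k) powr (b n + 1)) = lam n * \<rho> powr (B n + 1)"
        using hmu n by (simp add: algebra_simps)
    qed
    define P where "P = \<rho> powr (2*k - 2)"
    define X where "X = L\<^sup>2 / (2 * (\<rho> powr k)\<^sup>2)"
    define Y where "Y = \<xi> * (\<rho> powr k) powr (a + 1)"
    define S where "S = (\<Sum>n=1..N. \<mu> n * (\<rho> powr k) powr (b n + 1))"
    have d: "P * (- \<eta> - X - (Y + S)) = - (P * \<eta>) - P * X - P * Y - P * S"
      by (simp add: algebra_simps)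
    show ?thesis unfolding gen_poly_pot_def X_def[symmetric] Y_def[symmetric] S_def[symmetric] P_def[symmetric] d
      using p1 p2 p3 p4 hxi unfolding X_def[symmetric] Y_def[symmetric] S_def[symmetric] P_def[symmetric]
      by linarith
  qed
  have openJ: "open J"
  proof -
    have "continuous_on {0<..} (\<lambda>\<rho>::real. \<rho> powr k)"
      by (intro continuous_intros) auto
    with continuous_on_open_vimage[OF open_greaterThan[of "0::real"], of "\<lambda>\<rho>::real. \<rho> powr k"] oI
    have "open ((\<lambda>\<rho>. \<rho> powr k) -` I \<inter> {0<..})" by blast
    moreover have "(\<lambda>\<rho>. \<rho> powr k) -` I \<inter> {0::real<..} = J" unfolding J_def by auto
    ultimately show ?thesis by simp
  qed
  have intJ: "is_interval J"
    unfolding is_interval_1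
  proof (intro ballI allI impI)
    fix x y z assume x: "x \<in> J" and y: "y \<in> J" and xz: "x \<le> z \<and> z \<le> y"
    have "x powr k \<le> z powr k" "z powr k \<le> y powr k"
      using x xz kp unfolding J_def by (auto intro: powr_mono2)
    hence "z powr k \<in> I" using iI x y unfolding J_def is_interval_1 by blast
    thus "z \<in> J" using x xz unfolding J_def by auto
  qed
  have neJ: "J \<noteq> {}"
  proof -
    obtain r where r: "r \<in> I" using neI by auto
    hence rp: "r > 0" using sI by auto
    have "(r powr (1/k)) powr k = r" using rp kp by (simp add: powr_powr)
    hence "r powr (1/k) \<in> J" using r rp unfolding J_def by auto
    thus ?thesis by auto
  qed
  have derJ: "\<E> - L\<^sup>2 / (2 * \<rho>\<^sup>2) - gen_poly_pot \<eta> A N lam B \<rho> > 0 \<and>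
        ((\<lambda>\<rho>. 2 / (A + 3) * \<theta> (\<rho> powr ((A + 3) / 2))) has_real_derivative
          (L / \<rho>\<^sup>2) / sqrt (2 * (\<E> - L\<^sup>2 / (2 * \<rho>\<^sup>2) - gen_poly_pot \<eta> A N lam B \<rho>))) (at \<rho>)"
    if \<rho>J: "\<rho> \<in> J" for \<rho>
  proof -
    have rp: "\<rho> > 0" and rI: "\<rho> powr k \<in> I" using \<rho>J unfolding J_def by auto
    define r where "r = \<rho> powr k"
    define D where "D = - \<eta> - L\<^sup>2 / (2 * r\<^sup>2) - gen_poly_pot \<xi> a N \<mu> b r"
    have Dp: "D > 0" and dth: "(\<theta> has_real_derivative (L / r\<^sup>2) / sqrt (2 * D)) (at r)"
      using pI[OF rI] unfolding D_def r_def by auto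
    have kk: "\<E> - L\<^sup>2 / (2 * \<rho>\<^sup>2) - gen_poly_pot \<eta> A N lam B \<rho> = \<rho> powr (2*k - 2) * D"
      using key[OF rp] unfolding D_def r_def .
    have pos: "\<rho> powr (2*k - 2) * D > 0" using rp Dp by simp
    have dpow: "((\<lambda>z. z powr k) has_real_derivative k * \<rho> powr (k - 1)) (at \<rho>)"
      using rp by (rule has_real_derivative_powr)
    have dc: "((\<lambda>\<rho>. 2 / (A + 3) * \<theta> (\<rho> powr k)) has_real_derivative
        2 / (A + 3) * ((L / r\<^sup>2) / sqrt (2 * D) * (k * \<rho> powr (k - 1)))) (at \<rho>)"
      by (intro DERIV_cmult DERIV_chain2[OF _ dpow]) (use dth r_def in simp)
    have sq: "sqrt (2 * (\<rho> powr (2*k - 2) * D)) = \<rho> powr (k - 1) * sqrt (2 * D)"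
    proof -
      have "\<rho> powr (2*k - 2) = (\<rho> powr (k - 1))\<^sup>2"
        using sqp3[OF rp] .
      thus ?thesis using rp Dp by (simp add: real_sqrt_mult)
    qed
    have r2: "r\<^sup>2 = (\<rho> powr (k - 1))\<^sup>2 * \<rho>\<^sup>2"
      unfolding r_def using rp
      using sqp[OF rp, of k] sqp2[OF rp, of k] sqp3[OF rp, of k] by simp
    have val: "2 / (A + 3) * ((L / r\<^sup>2) / sqrt (2 * D) * (k * \<rho> powr (k - 1)))
        = (L / \<rho>\<^sup>2) / (\<rho> powr (k - 1) * sqrt (2 * D))"
    proof -
      have "2 / (A + 3) * k = 1" unfolding k_def using Ap by simp
      moreover have "sqrt (2*D) > 0" using Dp by simp
      moreover have "\<rho> powr (k - 1) > 0" using rp by simp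
      ultimately show ?thesis unfolding r2 using rp
        by (simp add: field_simps power2_eq_square)
    qed
    show ?thesis unfolding kk sq using pos dc val unfolding k_def by simp
  qed
  show ?thesis unfolding orbit_eq_def J_def[symmetric, unfolded k_def] k_def[symmetric]
    using openJ intJ neJ derJ unfolding J_def k_def by auto
qed

end
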